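(* Define $U:[0,\infty)\to\mathbb{R}$ by $U(r)=\lim_{n\to\infty}\sqrt{1+\sqrt{1+\dots+\sqrt{1+r^{2^n}}}}$ ($n$ nested roots; the $n=0$ term is $r$). Then $U$ restricted to $[1,\infty)$ is a continuous, unbounded map $[1,\infty)\to[U(1),\infty)$ that admits an inverse function.
   Context: The limit defining $U(r)$ exists for every $r\ge0$. The setting is constructive mathematics. *)

theory Defs
  imports "HOL-Analysis.Analysis"
begin

fun nested_root :: "nat \<Rightarrow> real \<Rightarrow> real" where
  "nested_root 0 x = x"
| "nested_root (Suc n) x = sqrt (1 + nested_root n x)"

definition U :: "real \<Rightarrow> real" where
  "U r = lim (\<lambda>n. nested_root n (r ^ (2 ^ n)))"

end

theory Submission
  imports Defs
begin

definition aa :: "nat \<Rightarrow> real \<Rightarrow> real" where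
  "aa n y = nested_root n (y ^ (2 ^ n))"

lemma aa0: "aa 0 y = y" by (simp add: aa_def)

lemma aaSuc: "aa (Suc n) y = sqrt (1 + aa n (y^2))"
  by (simp add: aa_def power_mult[symmetric] mult.commute)

lemma aa_lower: "y \<ge> 0 \<Longrightarrow> y \<le> aa n y"
proof (induction n arbitrary: y)
  case 0 then show ?case by (simp add: aa0)
next
  case (Suc n)
  have "y^2 \<le> aa n (y^2)" using Suc.IH[of "y^2"] by simp
  then have "sqrt (y^2) \<le> sqrt (1 + aa n (y^2))" by (intro real_sqrt_le_mono) simp
  then show ?case using Suc.prems by (simp add: aaSuc)
qed

lemma aa_upper: "y \<ge> 1 \<Longrightarrow> aa n y \<le> y + 1"
proof (induction n arbitrary: y)
  case 0 then show ?case by (simp add: aa0)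
next
  case (Suc n)
  have "1 \<le> y^2" using Suc.prems by (simp add: one_le_power)
  then have "aa n (y^2) \<le> y^2 + 1" using Suc.IH[of "y^2"] by simp
  then have "sqrt (1 + aa n (y^2)) \<le> sqrt ((y+1)^2)"
    using Suc.prems by (intro real_sqrt_le_mono) (simp add: power2_eq_square algebra_simps)
  then show ?case using Suc.prems by (simp add: aaSuc)
qed

lemma aa_inc: "aa n y \<le> aa (Suc n) y"
proof (induction n arbitrary: y)
  case 0
  have "y \<le> sqrt (1 + y^2)"
  proof -
    have "sqrt (y^2) \<le> sqrt (1 + y^2)" by (intro real_sqrt_le_mono) simp
    then show ?thesis by simp
  qed
  then show ?case by (simp add: aaSuc aa0)
next
  case (Suc n)
  have e1: "aa (Suc (Suc n)) y = sqrt (1 + aa (Suc n) (y^2))" by (rule aaSuc)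
  have e2: "aa (Suc n) y = sqrt (1 + aa n (y^2))" by (rule aaSuc)
  show ?case unfolding e1 e2
    using Suc.IH[of "y^2"] by (intro real_sqrt_le_mono) simp
qed

lemma nested_root_mono: "x \<le> z \<Longrightarrow> nested_root n x \<le> nested_root n z"
  by (induction n) auto

lemma aa_mono: "0 \<le> x \<Longrightarrow> x \<le> z \<Longrightarrow> aa n x \<le> aa n z"
  unfolding aa_def by (intro nested_root_mono power_mono) auto

lemma nested_root_cont: "continuous_on S (nested_root n)"
  by (induction n) (auto intro!: continuous_intros)

lemma aa_cont: "continuous_on S (aa n)"
  unfolding aa_def
  by (rule continuous_on_compose2[OF nested_root_cont[of UNIV]]) (auto intro!: continuous_intros)

lemma aa_conv: assumes "y \<ge> 1" shows "(\<lambda>n. aa n y) \<longlonglongrightarrow> U y"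
proof -
  have inc: "incseq (\<lambda>n. aa n y)" by (rule incseq_SucI) (rule aa_inc)
  have bd: "\<forall>i. aa i y \<le> y + 1" using aa_upper[OF assms] by blast
  obtain L where L: "(\<lambda>n. aa n y) \<longlonglongrightarrow> L" using incseq_convergent[OF inc bd] by blast
  have "lim (\<lambda>n. aa n y) = L" using L by (rule limI)
  moreover have "U y = lim (\<lambda>n. aa n y)" unfolding U_def aa_def by (rule refl)
  ultimately show ?thesis using L by simp
qed

lemma U_bounds: assumes "y \<ge> 1" shows "y \<le> U y" "U y \<le> y + 1"
proof -
  have l: "\<And>n. y \<le> aa n y" using assms by (intro aa_lower) simp
  have u: "\<And>n. aa n y \<le> y + 1" using assms by (rule aa_upper)
  show "y \<le> U y" by (rule LIMSEQ_le_const[OF aa_conv[OF assms]]) (use l in blast)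
  show "U y \<le> y + 1" by (rule LIMSEQ_le_const2[OF aa_conv[OF assms]]) (use u in blast)
qed

lemma U_mono: assumes "1 \<le> x" "x \<le> z" shows "U x \<le> U z"
proof -
  have z: "1 \<le> z" using assms by linarith
  have m: "\<And>n. aa n x \<le> aa n z" using assms by (intro aa_mono) simp_all
  show ?thesis by (rule LIMSEQ_le[OF aa_conv[OF assms(1)] aa_conv[OF z]]) (use m in blast)
qed

lemma U_rec: assumes "y \<ge> 1" shows "U y = sqrt (1 + U (y^2))"
proof -
  have y2: "y^2 \<ge> 1" using assms by (simp add: one_le_power)
  have "(\<lambda>n. aa (Suc n) y) \<longlonglongrightarrow> U y" using aa_conv[OF assms] by (rule LIMSEQ_Suc)
  moreover have "(\<lambda>n. aa (Suc n) y) \<longlonglongrightarrow> sqrt (1 + U (y^2))"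
    unfolding aaSuc by (intro tendsto_intros aa_conv y2)
  ultimately show ?thesis by (rule LIMSEQ_unique)
qed

lemma U_sq: assumes "y \<ge> 1" shows "U (y^2) = (U y)^2 - 1"
proof -
  have y2: "1 \<le> y^2" using assms by (simp add: one_le_power)
  have "U (y^2) \<ge> 1" using U_bounds(1)[OF y2] y2 by linarith
  then have "(sqrt (1 + U (y^2)))^2 = 1 + U (y^2)" by (intro real_sqrt_pow2) simp
  then have "(U y)^2 = 1 + U (y^2)" by (subst U_rec[OF assms])
  then show ?thesis by simp
qed

lemma sqrt_lip: assumes "0 \<le> x" "0 \<le> z" shows "\<bar>sqrt (1+x) - sqrt (1+z)\<bar> \<le> \<bar>x - z\<bar> / 2"
proof -
  have s: "sqrt (1+x) \<ge> 1" "sqrt (1+z) \<ge> 1" using assms by auto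
  have eq: "(sqrt (1+x) - sqrt (1+z)) * (sqrt (1+x) + sqrt (1+z)) = x - z"
    using assms by (simp add: algebra_simps)
  have b: "0 \<le> sqrt (1+x) + sqrt (1+z)" using s by linarith
  have "\<bar>sqrt (1+x) - sqrt (1+z)\<bar> * (sqrt (1+x) + sqrt (1+z))
      = \<bar>(sqrt (1+x) - sqrt (1+z)) * (sqrt (1+x) + sqrt (1+z))\<bar>"
    by (simp only: abs_mult abs_of_nonneg[OF b])
  then have "\<bar>sqrt (1+x) - sqrt (1+z)\<bar> * (sqrt (1+x) + sqrt (1+z)) = \<bar>x - z\<bar>"
    by (simp only: eq)
  moreover have "\<bar>sqrt (1+x) - sqrt (1+z)\<bar> * 2 \<le> \<bar>sqrt (1+x) - sqrt (1+z)\<bar> * (sqrt (1+x) + sqrt (1+z))"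
    using s by (intro mult_left_mono) (linarith, simp)
  ultimately show ?thesis by simp
qed

lemma aa_err: assumes "y \<ge> 1" shows "\<bar>aa n y - U y\<bar> \<le> 1 / 2^n"
  using assms
proof (induction n arbitrary: y)
  case 0 then show ?case using U_bounds[OF 0] by (simp add: aa0)
next
  case (Suc n)
  have y2: "y^2 \<ge> 1" using Suc.prems by (simp add: one_le_power)
  have "\<bar>aa (Suc n) y - U y\<bar> = \<bar>sqrt (1 + aa n (y^2)) - sqrt (1 + U (y^2))\<bar>"
    by (subst U_rec[OF Suc.prems]) (simp only: aaSuc)
  also have "\<dots> \<le> \<bar>aa n (y^2) - U (y^2)\<bar> / 2"
    using aa_lower[of "y^2" n] U_bounds(1)[OF y2] y2 by (intro sqrt_lip) auto
  also have "\<dots> \<le> (1/2^n) / 2" using Suc.IH[OF y2] by simp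
  finally show ?case by simp
qed

lemma U_cont: "continuous_on {1..} U"
proof (rule uniform_limit_theorem[where f = aa and F = sequentially])
  show "\<forall>\<^sub>F n in sequentially. continuous_on {1..} (aa n)" by (simp add: aa_cont)
  show "uniform_limit {1..} aa U sequentially"
    unfolding uniform_limit_iff
  proof (intro allI impI)
    fix e :: real assume e: "e > 0"
    obtain N where N: "1 / e < 2 ^ N" using real_arch_pow[of 2 "1/e"] by auto
    show "\<forall>\<^sub>F n in sequentially. \<forall>x\<in>{1..}. dist (aa n x) (U x) < e"
    proof (rule eventually_sequentiallyI[of N], intro ballI)
      fix n x assume n: "N \<le> n" and x: "x \<in> {1::real..}"
      have "(2::real)^N \<le> 2^n" using n by (intro power_increasing) auto
      then have "1 / e < 2^n" using N by linarith
      then have "1 / 2^n < e" using e by (simp add: field_simps)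
      then show "dist (aa n x) (U x) < e" using aa_err[of x n] x by (simp add: dist_real_def)
    qed
  qed
qed simp

lemma pow_gap: fixes r s :: real assumes "1 \<le> r" "r \<le> s" shows "s^(2^k) - r^(2^k) \<ge> 2^k * (s - r)"
  using assms
proof (induction k arbitrary: r s)
  case 0 then show ?case by (simp add: algebra_simps)
next
  case (Suc k)
  have r2: "1 \<le> r^2" "r^2 \<le> s^2" using Suc.prems by (auto simp: one_le_power power_mono)
  have "s^2 - r^2 = (s+r)*(s-r)" by (simp add: power2_eq_square algebra_simps)
  also have "\<dots> \<ge> 2 * (s - r)" using Suc.prems by (intro mult_right_mono) auto
  finally have "s^2 - r^2 \<ge> 2*(s-r)" .
  moreover have "(s^2)^(2^k) - (r^2)^(2^k) \<ge> 2^k * (s^2 - r^2)" using Suc.IH[OF r2] .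
  ultimately have A: "(s^2)^(2^k) - (r^2)^(2^k) \<ge> 2^k * (2 * (s - r))"
  proof -
    have "2^k * (2 * (s - r)) \<le> 2^k * (s^2 - r^2)"
      using \<open>s^2 - r^2 \<ge> 2*(s-r)\<close> by (intro mult_left_mono) auto
    then show ?thesis using \<open>(s^2)^(2^k) - (r^2)^(2^k) \<ge> 2^k * (s^2 - r^2)\<close> by linarith
  qed
  have E1: "(s^2)^(2^k) = s^(2^Suc k)" "(r^2)^(2^k) = r^(2^Suc k)"
    by (simp_all add: power_mult[symmetric])
  have E3: "(2::real)^k * (2 * (s - r)) = 2^Suc k * (s - r)" by simp
  show ?case using A unfolding E1 E3 .
qed

lemma U_pow_eq: assumes "1 \<le> r" "1 \<le> s" "U r = U s" shows "U (r^(2^k)) = U (s^(2^k))"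
  using assms
proof (induction k arbitrary: r s)
  case 0 then show ?case by simp
next
  case (Suc k)
  have "U (r^2) = U (s^2)" using U_sq[OF Suc.prems(1)] U_sq[OF Suc.prems(2)] Suc.prems(3) by simp
  moreover have "1 \<le> r^2" "1 \<le> s^2" using Suc.prems by (auto simp: one_le_power)
  ultimately have "U ((r^2)^(2^k)) = U ((s^2)^(2^k))" using Suc.IH by blast
  then show ?case by (simp add: power_mult[symmetric] mult.commute)
qed

lemma U_strict: assumes "1 \<le> r" "r < s" shows "U r \<noteq> U s"
proof
  assume eq: "U r = U s"
  obtain k where k: "1 / (s - r) < 2^k" using real_arch_pow[of 2 "1/(s-r)"] by auto
  have sr: "0 < s - r" using assms by simp
  have "1 < 2^k * (s - r)" using k sr by (simp add: divide_less_eq)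
  also have "\<dots> \<le> s^(2^k) - r^(2^k)" by (rule pow_gap[of r s k]) (use assms in linarith)+
  finally have gap: "1 < s^(2^k) - r^(2^k)" .
  have e: "U (r^(2^k)) = U (s^(2^k))" by (rule U_pow_eq[of r s k]) (use assms eq in linarith)+
  have r1: "1 \<le> r^(2^k)" by (rule one_le_power) (use assms in linarith)
  have s1: "1 \<le> s^(2^k)" by (rule one_le_power) (use assms in linarith)
  have "s^(2^k) \<le> U (s^(2^k))" by (rule U_bounds(1)[OF s1])
  moreover have "U (r^(2^k)) \<le> r^(2^k) + 1" by (rule U_bounds(2)[OF r1])
  ultimately show False using gap e by linarith
qed

theorem corollary9p1:
  shows "continuous_on {1..} U
    \<and> \<not> bounded (U ` {1..})
    \<and> bij_betw U {1..} {U 1..}"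
proof (intro conjI)
  show "continuous_on {1..} U" by (rule U_cont)
  show "\<not> bounded (U ` {1..})"
  proof
    assume "bounded (U ` {1..})"
    then obtain B where B: "\<And>x. x \<in> U ` {1..} \<Longrightarrow> norm x \<le> B" by (auto simp: bounded_iff)
    let ?x = "max 1 (B + 1)"
    have "norm (U ?x) \<le> B" by (intro B) auto
    moreover have "?x \<le> U ?x" by (intro U_bounds) auto
    ultimately show False by auto
  qed
  show "bij_betw U {1..} {U 1..}"
    unfolding bij_betw_def
  proof (intro conjI)
    show "inj_on U {1..}"
    proof (rule inj_onI)
      fix x y assume "x \<in> {1::real..}" "y \<in> {1::real..}" "U x = U y"
      then show "x = y" using U_strict[of x y] U_strict[of y x]
        by (cases x y rule: linorder_cases) auto
    qed
    show "U ` {1..} = {U 1..}"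
    proof
      show "U ` {1..} \<subseteq> {U 1..}" using U_mono by auto
      show "{U 1..} \<subseteq> U ` {1..}"
      proof
        fix y assume y: "y \<in> {U 1..}"
        have y1: "1 \<le> y" using y U_bounds(1)[of 1] by auto
        have "\<exists>x. 1 \<le> x \<and> x \<le> y \<and> U x = y"
          using y y1 U_bounds(1)[OF y1]
          by (intro IVT') (auto intro: continuous_on_subset[OF U_cont])
        then show "y \<in> U ` {1..}" by auto
      qed
    qed
  qed
qed

end
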